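(* Let $G$ be a simple directed graph on $[n]$ and $\sigma\subseteq[n]$, and suppose either $\sigma$ is a directed clique of $G$, or $\sigma$ contains a clique of $G$ of size $|\sigma|-1$. Then $\sigma$ is a stable motif (for a CTLN $W(G,\varepsilon,\delta)$ with legal parameters) if and only if $\sigma$ is a clique.
   Context: Let $G$ be a simple directed graph on $[n]=\{1,\dots,n\}$. Legal range: $\delta>0$, $0<\varepsilon<\frac{\delta}{\delta+1}$. The CTLN $W=W(G,\varepsilon,\delta)$ is the $n\times n$ matrix with $W_{ii}=0$, $W_{ij}=-1+\varepsilon$ if $j\to i$, $W_{ij}=-1-\delta$ if $i\neq j$ and $j\not\to i$; dynamics $\dot x_i=-x_i+[\sum_jW_{ij}x_j+\theta]_+$, $\theta>0$. CTLNs are assumed nondegenerate ($\det(I-W_\sigma)\ne0$ and all Cramer determinants for $(I-W_\sigma)x=\theta1_\sigma$ nonzero). $W_\sigma$ is the principal submatrix indexed by $\sigma$. $\sigma$ is a permitted motif if $\theta(I-W_\sigma)^{-1}1_\sigma$ has all entries positive; it is a stable motif if permitted and all eigenvalues of $I-W_\sigma$ have positive real part. A clique is a set of nodes pairwise bidirectionally connected. $\sigma$ is a directed clique if its nodes can be ordered $1,\dots,|\sigma|$ so that $i\to j$ in $G|_\sigma$ whenever $i<j$ (no constraint on edges $j\to i$ for $i<j$). *)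

theory Defs
  imports Complex_Main "Jordan_Normal_Form.Char_Poly" "Jordan_Normal_Form.Determinant"
begin

(* A simple directed graph on [n] = {1..n}: G i j means the edge i -> j. *)
definition simple_digraph :: "nat \<Rightarrow> (nat \<Rightarrow> nat \<Rightarrow> bool) \<Rightarrow> bool" where
  "simple_digraph n G \<longleftrightarrow> (\<forall>i j. G i j \<longrightarrow> i \<in> {1..n} \<and> j \<in> {1..n} \<and> i \<noteq> j)"

definition legal_params :: "real \<Rightarrow> real \<Rightarrow> bool" where
  "legal_params \<epsilon> \<delta> \<longleftrightarrow> \<delta> > 0 \<and> 0 < \<epsilon> \<and> \<epsilon> < \<delta> / (\<delta> + 1)"

(* CTLN weight matrix W(G,eps,delta): W i j is the weight from j to i *)
definition ctln_W :: "(nat \<Rightarrow> nat \<Rightarrow> bool) \<Rightarrow> real \<Rightarrow> real \<Rightarrow> nat \<Rightarrow> nat \<Rightarrow> real" where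
  "ctln_W G \<epsilon> \<delta> i j = (if i = j then 0 else if G j i then -1 + \<epsilon> else -1 - \<delta>)"

definition IminusW :: "(nat \<Rightarrow> nat \<Rightarrow> bool) \<Rightarrow> real \<Rightarrow> real \<Rightarrow> nat set \<Rightarrow> real mat" where
  "IminusW G \<epsilon> \<delta> \<sigma> =
     (let xs = sorted_list_of_set \<sigma> in
      mat (card \<sigma>) (card \<sigma>)
        (\<lambda>(a, b). (if a = b then 1 else 0) - ctln_W G \<epsilon> \<delta> (xs ! a) (xs ! b)))"

definition nondegenerate ::
  "nat \<Rightarrow> (nat \<Rightarrow> nat \<Rightarrow> bool) \<Rightarrow> real \<Rightarrow> real \<Rightarrow> real \<Rightarrow> bool" where
  "nondegenerate n G \<epsilon> \<delta> \<theta> \<longleftrightarrow>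
     (\<forall>\<tau> \<subseteq> {1..n}.
        det (IminusW G \<epsilon> \<delta> \<tau>) \<noteq> 0 \<and>
        (\<forall>k < card \<tau>. det (replace_col (IminusW G \<epsilon> \<delta> \<tau>) (vec (card \<tau>) (\<lambda>_. \<theta>)) k) \<noteq> 0))"

definition permitted_motif ::
  "(nat \<Rightarrow> nat \<Rightarrow> bool) \<Rightarrow> real \<Rightarrow> real \<Rightarrow> real \<Rightarrow> nat set \<Rightarrow> bool" where
  "permitted_motif G \<epsilon> \<delta> \<theta> \<sigma> \<longleftrightarrow>
     (\<exists>B. B \<in> carrier_mat (card \<sigma>) (card \<sigma>) \<and>
          inverts_mat (IminusW G \<epsilon> \<delta> \<sigma>) B \<and> inverts_mat B (IminusW G \<epsilon> \<delta> \<sigma>) \<and>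
          (\<forall>i < card \<sigma>. (\<theta> \<cdot>\<^sub>v (B *\<^sub>v vec (card \<sigma>) (\<lambda>_. 1))) $ i > 0))"

definition stable_motif ::
  "(nat \<Rightarrow> nat \<Rightarrow> bool) \<Rightarrow> real \<Rightarrow> real \<Rightarrow> real \<Rightarrow> nat set \<Rightarrow> bool" where
  "stable_motif G \<epsilon> \<delta> \<theta> \<sigma> \<longleftrightarrow>
     permitted_motif G \<epsilon> \<delta> \<theta> \<sigma> \<and>
     (\<forall>z. eigenvalue (map_mat complex_of_real (IminusW G \<epsilon> \<delta> \<sigma>)) z \<longrightarrow> Re z > 0)"

definition is_clique :: "(nat \<Rightarrow> nat \<Rightarrow> bool) \<Rightarrow> nat set \<Rightarrow> bool" where
  "is_clique G \<sigma> \<longleftrightarrow> (\<forall>i\<in>\<sigma>. \<forall>j\<in>\<sigma>. i \<noteq> j \<longrightarrow> G i j \<and> G j i)"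

definition directed_clique :: "(nat \<Rightarrow> nat \<Rightarrow> bool) \<Rightarrow> nat set \<Rightarrow> bool" where
  "directed_clique G \<sigma> \<longleftrightarrow>
     (\<exists>xs. distinct xs \<and> set xs = \<sigma> \<and>
           (\<forall>a b. a < b \<and> b < length xs \<longrightarrow> G (xs ! a) (xs ! b)))"

end

theory Submission
  imports Defs
begin

lemma sum_nodes:
  assumes "finite \<sigma>"
  shows "(\<Sum>j<card \<sigma>. f (sorted_list_of_set \<sigma> ! j)) = (\<Sum>l\<in>\<sigma>. f l)"
proof -
  let ?xs = "sorted_list_of_set \<sigma>"
  have "bij_betw ((!) ?xs) {..<length ?xs} (set ?xs)"
    by (rule bij_betw_nth) auto
  then have "(\<Sum>j<length ?xs. f (?xs ! j)) = (\<Sum>l\<in>set ?xs. f l)"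
    by (rule sum.reindex_bij_betw)
  then show ?thesis using assms by simp
qed

lemma sum_delta_mult:
  assumes "i < (m::nat)"
  shows "(\<Sum>j<m. (if i = j then 1 else 0) * g j) = (g i :: 'a::comm_ring_1)"
proof -
  have "(\<Sum>j<m. (if i = j then 1 else 0) * g j) = (\<Sum>j<m. if i = j then g j else 0)"
    by (rule sum.cong) auto
  also have "\<dots> = g i" using assms by (subst sum.delta') auto
  finally show ?thesis .
qed

lemma IminusW_carrier: "IminusW G \<epsilon> \<delta> \<sigma> \<in> carrier_mat (card \<sigma>) (card \<sigma>)"
  unfolding IminusW_def Let_def by simp

lemma IminusW_index:
  assumes "i < card \<sigma>" "j < card \<sigma>"
  shows "IminusW G \<epsilon> \<delta> \<sigma> $$ (i,j) = (if i = j then 1 else 0)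
           - ctln_W G \<epsilon> \<delta> (sorted_list_of_set \<sigma> ! i) (sorted_list_of_set \<sigma> ! j)"
  unfolding IminusW_def Let_def using assms by simp

lemma Mvec:
  assumes fin: "finite \<sigma>" and i: "i < card \<sigma>"
  shows "(IminusW G \<epsilon> \<delta> \<sigma> *\<^sub>v vec (card \<sigma>) (\<lambda>j. f (sorted_list_of_set \<sigma> ! j))) $ i
     = f (sorted_list_of_set \<sigma> ! i) - (\<Sum>l\<in>\<sigma>. ctln_W G \<epsilon> \<delta> (sorted_list_of_set \<sigma> ! i) l * f l)"
proof -
  let ?xs = "sorted_list_of_set \<sigma>"
  let ?m = "card \<sigma>"
  have "(IminusW G \<epsilon> \<delta> \<sigma> *\<^sub>v vec ?m (\<lambda>j. f (?xs ! j))) $ i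
      = (\<Sum>j<?m. ((if i = j then 1 else 0) - ctln_W G \<epsilon> \<delta> (?xs ! i) (?xs ! j)) * f (?xs ! j))"
    using i IminusW_carrier[of G \<epsilon> \<delta> \<sigma>]
    by (simp add: scalar_prod_def IminusW_index lessThan_atLeast0)
  also have "\<dots> = (\<Sum>j<?m. (if i = j then 1 else 0) * f (?xs ! j)) - (\<Sum>j<?m. ctln_W G \<epsilon> \<delta> (?xs ! i) (?xs ! j) * f (?xs ! j))"
    by (simp add: left_diff_distrib sum_subtractf)
  also have "\<dots> = f (?xs ! i) - (\<Sum>l\<in>\<sigma>. ctln_W G \<epsilon> \<delta> (?xs ! i) l * f l)"
    using i sum_nodes[OF fin, of "\<lambda>l. ctln_W G \<epsilon> \<delta> (?xs ! i) l * f l"]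
      sum_delta_mult[OF i, of "\<lambda>j. f (?xs ! j)"] by simp
  finally show ?thesis .
qed

lemma Mvec_c:
  assumes fin: "finite \<sigma>" and i: "i < card \<sigma>"
  shows "(map_mat complex_of_real (IminusW G \<epsilon> \<delta> \<sigma>) *\<^sub>v vec (card \<sigma>) (\<lambda>j. f (sorted_list_of_set \<sigma> ! j))) $ i
     = f (sorted_list_of_set \<sigma> ! i) - (\<Sum>l\<in>\<sigma>. complex_of_real (ctln_W G \<epsilon> \<delta> (sorted_list_of_set \<sigma> ! i) l) * f l)"
proof -
  let ?xs = "sorted_list_of_set \<sigma>"
  let ?m = "card \<sigma>"
  have "(map_mat complex_of_real (IminusW G \<epsilon> \<delta> \<sigma>) *\<^sub>v vec ?m (\<lambda>j. f (?xs ! j))) $ i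
      = (\<Sum>j<?m. ((if i = j then 1 else 0) - complex_of_real (ctln_W G \<epsilon> \<delta> (?xs ! i) (?xs ! j))) * f (?xs ! j))"
    using i IminusW_carrier[of G \<epsilon> \<delta> \<sigma>]
    by (auto simp add: scalar_prod_def IminusW_index lessThan_atLeast0 intro!: sum.cong)
  also have "\<dots> = (\<Sum>j<?m. (if i = j then 1 else 0) * f (?xs ! j)) - (\<Sum>j<?m. complex_of_real (ctln_W G \<epsilon> \<delta> (?xs ! i) (?xs ! j)) * f (?xs ! j))"
    by (simp add: left_diff_distrib sum_subtractf)
  also have "\<dots> = f (?xs ! i) - (\<Sum>l\<in>\<sigma>. complex_of_real (ctln_W G \<epsilon> \<delta> (?xs ! i) l) * f l)"
    using i sum_nodes[OF fin, of "\<lambda>l. complex_of_real (ctln_W G \<epsilon> \<delta> (?xs ! i) l) * f l"]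
      sum_delta_mult[OF i, of "\<lambda>j. f (?xs ! j)"] by simp
  finally show ?thesis .
qed


lemma legal_facts:
  assumes "legal_params \<epsilon> \<delta>"
  shows "0 < \<epsilon>" "\<epsilon> < 1" "0 < \<delta>" "\<epsilon> < \<delta>"
proof -
  have d: "\<delta> > 0" and e: "0 < \<epsilon>" and l: "\<epsilon> < \<delta> / (\<delta> + 1)"
    using assms unfolding legal_params_def by auto
  have a1: "\<delta> / (\<delta> + 1) < 1" using d by (simp add: divide_less_eq)
  have a2: "\<delta> / (\<delta> + 1) \<le> \<delta>" using d by (simp add: divide_le_eq)
  show "0 < \<epsilon>" "\<epsilon> < 1" "0 < \<delta>" "\<epsilon> < \<delta>" using d e l a1 a2 by linarith+
qed

lemma W_simps:
  "ctln_W G \<epsilon> \<delta> i i = 0"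
  "i \<noteq> j \<Longrightarrow> G j i \<Longrightarrow> ctln_W G \<epsilon> \<delta> i j = -1 + \<epsilon>"
  "i \<noteq> j \<Longrightarrow> \<not> G j i \<Longrightarrow> ctln_W G \<epsilon> \<delta> i j = -1 - \<delta>"
  unfolding ctln_W_def by auto

lemma permitted_solution:
  assumes fin: "finite \<sigma>" and perm: "permitted_motif G \<epsilon> \<delta> \<theta> \<sigma>"
  shows "\<exists>f. (\<forall>p\<in>\<sigma>. f p > 0) \<and> (\<forall>p\<in>\<sigma>. f p - (\<Sum>l\<in>\<sigma>. ctln_W G \<epsilon> \<delta> p l * f l) = \<theta>)"
proof -
  let ?xs = "sorted_list_of_set \<sigma>"
  let ?m = "card \<sigma>"
  let ?M = "IminusW G \<epsilon> \<delta> \<sigma>"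
  have len: "length ?xs = ?m" using fin by simp
  have dist: "distinct ?xs" by simp
  have setxs: "set ?xs = \<sigma>" using fin by simp
  obtain B where B: "B \<in> carrier_mat ?m ?m" and inv: "inverts_mat ?M B"
    and pos: "\<forall>i < ?m. (\<theta> \<cdot>\<^sub>v (B *\<^sub>v vec ?m (\<lambda>_. 1))) $ i > 0"
    using perm unfolding permitted_motif_def by blast
  define x where "x = \<theta> \<cdot>\<^sub>v (B *\<^sub>v vec ?m (\<lambda>_. 1))"
  have Mc: "?M \<in> carrier_mat ?m ?m" by (rule IminusW_carrier)
  have MB: "?M * B = 1\<^sub>m ?m" using inv Mc unfolding inverts_mat_def by simp
  have xdim: "x \<in> carrier_vec ?m" unfolding x_def using B by simp
  have Mx: "?M *\<^sub>v x = \<theta> \<cdot>\<^sub>v vec ?m (\<lambda>_. 1)"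
  proof -
    have "?M *\<^sub>v x = \<theta> \<cdot>\<^sub>v (?M *\<^sub>v (B *\<^sub>v vec ?m (\<lambda>_. 1)))"
      unfolding x_def using Mc B by (simp add: mult_mat_vec)
    also have "?M *\<^sub>v (B *\<^sub>v vec ?m (\<lambda>_. 1)) = (?M * B) *\<^sub>v vec ?m (\<lambda>_. 1)"
      using Mc B by (simp add: assoc_mult_mat_vec)
    also have "\<dots> = vec ?m (\<lambda>_. 1)" using MB by simp
    finally show ?thesis .
  qed
  define idx where "idx l = (THE i. i < ?m \<and> ?xs ! i = l)" for l
  have idx: "idx (?xs ! i) = i" if "i < ?m" for i
    unfolding idx_def
    by (rule the_equality) (use that in \<open>auto simp: nth_eq_iff_index_eq[OF dist] len\<close>)
  define f where "f l = x $ idx l" for l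
  have xeq: "x = vec ?m (\<lambda>i. f (?xs ! i))"
    by (rule eq_vecI) (use xdim idx in \<open>auto simp: f_def\<close>)
  have fpos: "\<forall>p\<in>\<sigma>. f p > 0"
  proof
    fix p assume "p \<in> \<sigma>"
    then obtain i where i: "i < ?m" "p = ?xs ! i" using setxs len by (metis in_set_conv_nth)
    show "f p > 0" using pos i idx unfolding f_def x_def by auto
  qed
  have feq: "\<forall>p\<in>\<sigma>. f p - (\<Sum>l\<in>\<sigma>. ctln_W G \<epsilon> \<delta> p l * f l) = \<theta>"
  proof
    fix p assume "p \<in> \<sigma>"
    then obtain i where i: "i < ?m" "p = ?xs ! i" using setxs len by (metis in_set_conv_nth)
    have "(?M *\<^sub>v x) $ i = \<theta>" using Mx i by simp
    then show "f p - (\<Sum>l\<in>\<sigma>. ctln_W G \<epsilon> \<delta> p l * f l) = \<theta>"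
      using Mvec[OF fin i(1), of G \<epsilon> \<delta> f] i xeq by simp
  qed
  show ?thesis using fpos feq by blast
qed

lemma domination:
  assumes fin: "finite \<sigma>" and lp: "legal_params \<epsilon> \<delta>"
    and j: "j \<in> \<sigma>" and k: "k \<in> \<sigma>" and jk: "j \<noteq> k"
    and Gjk: "G j k" and nGkj: "\<not> G k j"
    and sub: "\<forall>l\<in>\<sigma>. l \<noteq> j \<longrightarrow> l \<noteq> k \<longrightarrow> G l j \<longrightarrow> G l k"
  shows "\<not> permitted_motif G \<epsilon> \<delta> \<theta> \<sigma>"
proof
  assume "permitted_motif G \<epsilon> \<delta> \<theta> \<sigma>"
  then obtain f where fpos: "\<forall>p\<in>\<sigma>. f p > 0"
    and feq: "\<forall>p\<in>\<sigma>. f p - (\<Sum>l\<in>\<sigma>. ctln_W G \<epsilon> \<delta> p l * f l) = \<theta>"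
    using permitted_solution[OF fin] by blast
  note lf = legal_facts[OF lp]
  let ?W = "ctln_W G \<epsilon> \<delta>"
  define R where "R = \<sigma> - {j} - {k}"
  have split: "(\<Sum>l\<in>\<sigma>. g l) = g j + g k + (\<Sum>l\<in>R. g l)" for g :: "nat \<Rightarrow> real"
  proof -
    have "(\<Sum>l\<in>\<sigma>. g l) = g j + (\<Sum>l\<in>\<sigma> - {j}. g l)" using fin j by (rule sum.remove)
    also have "(\<Sum>l\<in>\<sigma> - {j}. g l) = g k + (\<Sum>l\<in>R. g l)"
      unfolding R_def using fin k jk by (intro sum.remove) auto
    finally show ?thesis by simp
  qed
  have e1: "f k - (\<Sum>l\<in>\<sigma>. ?W k l * f l) = \<theta>" using feq k by blast
  have e2: "f j - (\<Sum>l\<in>\<sigma>. ?W j l * f l) = \<theta>" using feq j by blast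
  have Wkj: "?W k j = -1 + \<epsilon>" using jk Gjk by (simp add: W_simps)
  have Wjk: "?W j k = -1 - \<delta>" using jk nGkj by (simp add: W_simps)
  have nn: "(\<Sum>l\<in>R. (?W k l - ?W j l) * f l) \<ge> 0"
  proof (rule sum_nonneg)
    fix l assume l: "l \<in> R"
    then have "l \<in> \<sigma>" "l \<noteq> j" "l \<noteq> k" unfolding R_def by auto
    then have "?W k l \<ge> ?W j l" using sub lf unfolding ctln_W_def by auto
    moreover have "f l > 0" using fpos \<open>l \<in> \<sigma>\<close> by simp
    ultimately show "(?W k l - ?W j l) * f l \<ge> 0" by simp
  qed
  have "(\<Sum>l\<in>R. (?W k l - ?W j l) * f l) = (\<Sum>l\<in>R. ?W k l * f l) - (\<Sum>l\<in>R. ?W j l * f l)"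
    by (simp add: left_diff_distrib sum_subtractf)
  moreover have "0 = -\<epsilon> * f j - \<delta> * f k - ((\<Sum>l\<in>R. ?W k l * f l) - (\<Sum>l\<in>R. ?W j l * f l))"
    using e1 e2 split[of "\<lambda>l. ?W k l * f l"] split[of "\<lambda>l. ?W j l * f l"] Wkj Wjk
    by (simp add: W_simps algebra_simps)
  moreover have "f j > 0" "f k > 0" using fpos j k by auto
  moreover have "\<epsilon> * f j > 0" "\<delta> * f k > 0" using \<open>f j > 0\<close> \<open>f k > 0\<close> lf by simp_all
  ultimately show False using nn by linarith
qed


lemma clique_stable:
  assumes fin: "finite \<sigma>" and lp: "legal_params \<epsilon> \<delta>" and th: "\<theta> > 0"
    and cl: "is_clique G \<sigma>"
  shows "stable_motif G \<epsilon> \<delta> \<theta> \<sigma>"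
proof -
  let ?xs = "sorted_list_of_set \<sigma>"
  let ?m = "card \<sigma>"
  let ?M = "IminusW G \<epsilon> \<delta> \<sigma>"
  note lf = legal_facts[OF lp]
  have len: "length ?xs = ?m" using fin by simp
  have dist: "distinct ?xs" by simp
  have setxs: "set ?xs = \<sigma>" using fin by simp
  define a where "a = 1 - \<epsilon>"
  define s where "s = \<epsilon> + a * real ?m"
  have apos: "a > 0" unfolding a_def using lf by simp
  have "a * real ?m \<ge> 0" using apos by simp
  then have spos: "s > 0" unfolding s_def using lf by linarith
  have Mc: "?M \<in> carrier_mat ?m ?m" by (rule IminusW_carrier)
  have Ment: "?M $$ (i,j) = \<epsilon> * (if i = j then 1 else 0) + a" if "i < ?m" "j < ?m" for i j
  proof (cases "i = j")
    case True
    then show ?thesis using that by (simp add: IminusW_index W_simps a_def)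
  next
    case False
    have ne: "?xs ! i \<noteq> ?xs ! j" using False that dist len by (simp add: nth_eq_iff_index_eq)
    have "?xs ! i \<in> \<sigma>" "?xs ! j \<in> \<sigma>" using that len setxs by (auto simp del: set_sorted_list_of_set)
    then have "G (?xs ! j) (?xs ! i)" using cl ne unfolding is_clique_def by blast
    then show ?thesis using that False ne by (simp add: IminusW_index W_simps a_def)
  qed
  have key: "(\<Sum>l<?m. (\<epsilon> * (if i = l then 1 else 0) + a) * (((if l = j then 1 else 0) - a / s) / \<epsilon>))
              = (if i = j then 1 else 0)" if "i < ?m" "j < ?m" for i j
  proof -
    have pw: "(\<epsilon> * (if i = l then 1 else 0) + a) * (((if l = j then 1 else 0) - a / s) / \<epsilon>)
        = (if i = l then 1 else 0) * ((if l = j then 1 else 0) - a / s)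
          + (if j = l then 1 else 0) * (a / \<epsilon>) - a * a / (s * \<epsilon>)" for l
      using lf spos by (auto simp: field_simps)
    have "(\<Sum>l<?m. (\<epsilon> * (if i = l then 1 else 0) + a) * (((if l = j then 1 else 0) - a / s) / \<epsilon>))
        = (\<Sum>l<?m. (if i = l then 1 else 0) * ((if l = j then 1 else 0) - a / s))
          + (\<Sum>l<?m. (if j = l then 1 else 0) * (a / \<epsilon>)) - real ?m * (a * a / (s * \<epsilon>))"
      unfolding pw by (simp add: sum.distrib sum_subtractf)
    also have "\<dots> = ((if i = j then 1 else 0) - a / s) + a / \<epsilon> - real ?m * (a * a / (s * \<epsilon>))"
      using sum_delta_mult[OF that(1), of "\<lambda>l. (if l = j then 1 else 0) - a / s"]
        sum_delta_mult[OF that(2), of "\<lambda>l. a / \<epsilon>"] by simp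
    also have "\<dots> = (if i = j then 1 else 0)"
    proof -
      have "a / \<epsilon> - a / s - real ?m * (a * a / (s * \<epsilon>)) = 0"
        using lf spos unfolding s_def by (simp add: field_simps)
      then show ?thesis by simp
    qed
    finally show ?thesis .
  qed
  define B where "B = mat ?m ?m (\<lambda>(i,j). ((if i = j then 1 else 0) - a / s) / \<epsilon>)"
  have Bc: "B \<in> carrier_mat ?m ?m" unfolding B_def by simp
  have MB: "?M * B = 1\<^sub>m ?m"
  proof (rule eq_matI)
    fix i j assume ij: "i < dim_row (1\<^sub>m ?m)" "j < dim_col (1\<^sub>m ?m)"
    then have i: "i < ?m" and j: "j < ?m" by auto
    have "(?M * B) $$ (i,j) = (\<Sum>l<?m. ?M $$ (i,l) * B $$ (l,j))"
      using Mc Bc i j by (simp add: scalar_prod_def lessThan_atLeast0)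
    also have "\<dots> = (\<Sum>l<?m. (\<epsilon> * (if i = l then 1 else 0) + a) * (((if l = j then 1 else 0) - a / s) / \<epsilon>))"
      using i j by (intro sum.cong) (auto simp: Ment B_def)
    also have "\<dots> = 1\<^sub>m ?m $$ (i,j)" using key[OF i j] i j by simp
    finally show "(?M * B) $$ (i,j) = 1\<^sub>m ?m $$ (i,j)" .
  qed (use Mc Bc in auto)
  have BM: "B * ?M = 1\<^sub>m ?m"
  proof (rule eq_matI)
    fix i j assume ij: "i < dim_row (1\<^sub>m ?m)" "j < dim_col (1\<^sub>m ?m)"
    then have i: "i < ?m" and j: "j < ?m" by auto
    have "(B * ?M) $$ (i,j) = (\<Sum>l<?m. B $$ (i,l) * ?M $$ (l,j))"
      using Mc Bc i j by (simp add: scalar_prod_def lessThan_atLeast0)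
    also have "\<dots> = (\<Sum>l<?m. (\<epsilon> * (if j = l then 1 else 0) + a) * (((if l = i then 1 else 0) - a / s) / \<epsilon>))"
      using i j by (intro sum.cong) (auto simp: Ment B_def)
    also have "\<dots> = 1\<^sub>m ?m $$ (i,j)" using key[OF j i] i j by simp
    finally show "(B * ?M) $$ (i,j) = 1\<^sub>m ?m $$ (i,j)" .
  qed (use Mc Bc in auto)
  have invs: "inverts_mat ?M B" "inverts_mat B ?M"
    unfolding inverts_mat_def using MB BM Mc Bc by auto
  have posv: "(\<theta> \<cdot>\<^sub>v (B *\<^sub>v vec ?m (\<lambda>_. 1))) $ i > 0" if i: "i < ?m" for i
  proof -
    have "(\<theta> \<cdot>\<^sub>v (B *\<^sub>v vec ?m (\<lambda>_. 1))) $ i = \<theta> * (\<Sum>l<?m. ((if i = l then 1 else 0) - a / s) / \<epsilon>)"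
      using i Bc by (simp add: scalar_prod_def lessThan_atLeast0 B_def)
    also have "(\<Sum>l<?m. ((if i = l then 1 else 0) - a / s) / \<epsilon>) = (1 - real ?m * (a / s)) / \<epsilon>"
      using i by (simp add: sum_divide_distrib[symmetric] sum_subtractf)
    also have "\<dots> = 1 / s"
    proof -
      have "1 - real ?m * (a / s) = \<epsilon> / s" using spos unfolding s_def by (simp add: field_simps)
      then show ?thesis using lf by simp
    qed
    finally show ?thesis using th spos by simp
  qed
  have perm: "permitted_motif G \<epsilon> \<delta> \<theta> \<sigma>"
    unfolding permitted_motif_def using Bc invs posv by blast
  have eig: "Re z > 0" if ev: "eigenvalue (map_mat complex_of_real ?M) z" for z
  proof -
    let ?Mc = "map_mat complex_of_real ?M"
    obtain v where v: "v \<in> carrier_vec ?m" "v \<noteq> 0\<^sub>v ?m" "?Mc *\<^sub>v v = z \<cdot>\<^sub>v v"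
      using ev Mc unfolding eigenvalue_def eigenvector_def by auto
    define S where "S = (\<Sum>l<?m. v $ l)"
    have row: "z * v $ i = complex_of_real \<epsilon> * v $ i + complex_of_real a * S" if i: "i < ?m" for i
    proof -
      have "z * v $ i = (?Mc *\<^sub>v v) $ i" using v(3) i v(1) by simp
      also have "\<dots> = (\<Sum>l<?m. complex_of_real (?M $$ (i,l)) * v $ l)"
        using i Mc v(1) by (simp add: scalar_prod_def lessThan_atLeast0)
      also have "\<dots> = (\<Sum>l<?m. (if i = l then 1 else 0) * (complex_of_real \<epsilon> * v $ l) + complex_of_real a * v $ l)"
        using i by (intro sum.cong) (auto simp: Ment algebra_simps)
      also have "\<dots> = complex_of_real \<epsilon> * v $ i + complex_of_real a * S"
        unfolding S_def using sum_delta_mult[OF i, of "\<lambda>l. complex_of_real \<epsilon> * v $ l"]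
        by (simp add: sum.distrib sum_distrib_left)
      finally show ?thesis .
    qed
    show ?thesis
    proof (cases "S = 0")
      case True
      obtain i where i: "i < ?m" "v $ i \<noteq> 0"
      proof -
        have "\<exists>i < ?m. v $ i \<noteq> 0"
        proof (rule ccontr)
          assume "\<not> (\<exists>i < ?m. v $ i \<noteq> 0)"
          then have "v = 0\<^sub>v ?m" using v(1) by (intro eq_vecI) auto
          then show False using v(2) by simp
        qed
        then show ?thesis using that by blast
      qed
      have "z * v $ i = complex_of_real \<epsilon> * v $ i" using row[OF i(1)] True by simp
      then have "z = complex_of_real \<epsilon>" using i(2) by simp
      then show ?thesis using lf by simp
    next
      case False
      have "z * S = (\<Sum>i<?m. z * v $ i)" unfolding S_def by (simp add: sum_distrib_left)
      also have "\<dots> = (\<Sum>i<?m. complex_of_real \<epsilon> * v $ i + complex_of_real a * S)"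
        using row by (intro sum.cong) auto
      also have "\<dots> = (complex_of_real \<epsilon> + complex_of_real a * of_nat ?m) * S"
        unfolding S_def by (simp add: sum.distrib sum_distrib_left algebra_simps)
      finally have "z = complex_of_real \<epsilon> + complex_of_real a * of_nat ?m" using False by simp
      then show ?thesis using spos unfolding s_def by simp
    qed
  qed
  show ?thesis unfolding stable_motif_def using perm eig by blast
qed


lemma key_ineq:
  fixes \<epsilon> \<delta> a b k p u :: real
  assumes e: "0 < \<epsilon>" "\<epsilon> < 1" and d: "0 < \<delta>" "\<epsilon> < \<delta>"
    and a: "a = 1 - \<epsilon>" and b: "b = \<epsilon> + \<delta>"
    and p1: "1 \<le> p" and pu: "p \<le> u" and uk: "u \<le> k"
  shows "(\<epsilon> + a * k) * (k * a * a + a * b * p + a * b * u + b * b * p)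
         - a * (k * a + b * p) * (k * a + b * u) - \<epsilon> * (\<epsilon> + a * k) > 0"
proof -
  have apos: "a > 0" using a e by simp
  have bpos: "b > \<epsilon>" using b d by simp
  have ident: "(\<epsilon> + a * k) * (k * a * a + a * b * p + a * b * u + b * b * p)
         - a * (k * a + b * p) * (k * a + b * u) - \<epsilon> * (\<epsilon> + a * k)
      = \<epsilon> * k * a * a + \<epsilon> * a * b * p + \<epsilon> * a * b * u + \<epsilon> * b * b * p
        + a * b * b * p * (k - u) - \<epsilon> * \<epsilon> - \<epsilon> * a * k"
    by (simp add: algebra_simps)
  have pb: "b * b * p \<ge> \<epsilon> * \<epsilon>"
  proof -
    have "b * b \<ge> \<epsilon> * \<epsilon>" using bpos e by (intro mult_mono) auto
    moreover have "b * b * p \<ge> b * b" using p1 by (simp add: mult_le_cancel_left1)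
    ultimately show ?thesis by linarith
  qed
  have h1: "a * b * b * p * (k - u) \<ge> a * \<epsilon> * \<epsilon> * (k - u)"
  proof -
    have "a * (k - u) \<ge> 0" using apos uk by simp
    then have "a * (k - u) * (b * b * p) \<ge> a * (k - u) * (\<epsilon> * \<epsilon>)" by (rule mult_left_mono[OF pb])
    then show ?thesis by (simp add: algebra_simps)
  qed
  have h2: "\<epsilon> * a * b * u \<ge> \<epsilon> * a * \<epsilon> * u"
  proof -
    have "\<epsilon> * a * u \<ge> 0" using e apos p1 pu by simp
    then have "\<epsilon> * a * u * b \<ge> \<epsilon> * a * u * \<epsilon>" using bpos by (intro mult_left_mono) auto
    then show ?thesis by (simp add: algebra_simps)
  qed
  have h3: "\<epsilon> * a * b * p + \<epsilon> * b * b * p \<ge> \<epsilon> * a * b + \<epsilon> * b * b"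
  proof -
    have "\<epsilon> * a * b + \<epsilon> * b * b \<ge> 0" using e apos bpos by simp
    then have "(\<epsilon> * a * b + \<epsilon> * b * b) * p \<ge> (\<epsilon> * a * b + \<epsilon> * b * b) * 1" using p1
      by (intro mult_left_mono) auto
    then show ?thesis by (simp add: algebra_simps)
  qed
  have h4: "\<epsilon> * a * b + \<epsilon> * b * b - \<epsilon> * \<epsilon> > 0"
  proof -
    have ab: "a + b = 1 + \<delta>" using a b by simp
    have "a * b + b * b = b * (a + b)" by (simp add: algebra_simps)
    then have "a * b + b * b - \<epsilon> = b * (1 + \<delta>) - \<epsilon>" using ab by simp
    also have "b * (1 + \<delta>) > b" using bpos e d by simp
    then have "b * (1 + \<delta>) - \<epsilon> > 0" using bpos by linarith
    finally have "a * b + b * b - \<epsilon> > 0" .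
    then have "\<epsilon> * (a * b + b * b - \<epsilon>) > 0" using e by simp
    then show ?thesis by (simp add: algebra_simps)
  qed
  have h5: "\<epsilon> * k * a * a + a * \<epsilon> * \<epsilon> * k - \<epsilon> * a * k = 0"
  proof -
    have "\<epsilon> * k * a * a + a * \<epsilon> * \<epsilon> * k - \<epsilon> * a * k = \<epsilon> * k * a * (a + \<epsilon> - 1)"
      by (simp add: algebra_simps)
    also have "a + \<epsilon> - 1 = 0" using a by simp
    finally show ?thesis by simp
  qed
  have h1': "a * b * b * p * (k - u) \<ge> a * \<epsilon> * \<epsilon> * k - \<epsilon> * a * \<epsilon> * u"
    using h1 by (simp add: algebra_simps)
  show ?thesis unfolding ident using h1' h2 h3 h4 h5 by linarith
qed

lemma neg_eig:
  assumes fin: "finite \<sigma>" and lp: "legal_params \<epsilon> \<delta>" and v: "v \<in> \<sigma>"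
    and tne: "\<sigma> - {v} \<noteq> {}" and cl: "is_clique G (\<sigma> - {v})"
    and ex: "\<exists>i\<in>\<sigma> - {v}. \<not> G i v" and mono: "\<forall>i\<in>\<sigma> - {v}. G v i \<longrightarrow> G i v"
  shows "\<exists>\<mu> w. \<mu> > 0 \<and> w v = 1 \<and>
           (\<forall>p\<in>\<sigma>. w p - (\<Sum>l\<in>\<sigma>. ctln_W G \<epsilon> \<delta> p l * w l) = - \<mu> * w p)"
proof -
  define \<tau> where "\<tau> = \<sigma> - {v}"
  note lf = legal_facts[OF lp]
  let ?W = "ctln_W G \<epsilon> \<delta>"
  define a where "a = 1 - \<epsilon>"
  define b where "b = \<epsilon> + \<delta>"
  define k where "k = real (card \<tau>)"
  define \<rho> where "\<rho> i = (if G i v then 0 else 1::real)" for i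
  define \<gamma> where "\<gamma> i = (if G v i then 0 else 1::real)" for i
  define r where "r i = a + b * \<rho> i" for i
  define c where "c i = a + b * \<gamma> i" for i
  define R where "R = (\<Sum>i\<in>\<tau>. r i)"
  define C where "C = (\<Sum>i\<in>\<tau>. c i)"
  define RC where "RC = (\<Sum>i\<in>\<tau>. r i * c i)"
  define p where "p = (\<Sum>i\<in>\<tau>. \<rho> i)"
  define u where "u = (\<Sum>i\<in>\<tau>. \<gamma> i)"
  have fint: "finite \<tau>" unfolding \<tau>_def using fin by simp
  have vt: "v \<notin> \<tau>" unfolding \<tau>_def by simp
  have sig: "\<sigma> = insert v \<tau>" unfolding \<tau>_def using v by auto
  have tne': "\<tau> \<noteq> {}" using tne unfolding \<tau>_def .
  have "card \<tau> \<ge> 1" using fint tne' by (simp add: Suc_le_eq card_gt_0_iff)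
  then have kpos: "k \<ge> 1" unfolding k_def by simp
  have apos: "a > 0" unfolding a_def using lf by simp
  have bpos: "b > 0" unfolding b_def using lf by simp
  have Wvi: "?W v i = - r i" if "i \<in> \<tau>" for i
    using that vt unfolding ctln_W_def r_def \<rho>_def a_def b_def by auto
  have Wiv: "?W i v = - c i" if "i \<in> \<tau>" for i
    using that vt unfolding ctln_W_def c_def \<gamma>_def a_def b_def by auto
  have Wil: "?W i l = (if i = l then 0 else - a)" if "i \<in> \<tau>" "l \<in> \<tau>" for i l
  proof (cases "i = l")
    case False
    then have "G l i" using cl that unfolding is_clique_def \<tau>_def by blast
    then show ?thesis using False unfolding ctln_W_def a_def by simp
  qed (simp add: ctln_W_def)
  have rg: "\<rho> i * \<gamma> i = \<rho> i" if "i \<in> \<tau>" for i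
    using that mono unfolding \<rho>_def \<gamma>_def \<tau>_def by auto
  have R_eq: "R = k * a + b * p"
    unfolding R_def r_def p_def k_def by (simp add: sum.distrib sum_distrib_left)
  have C_eq: "C = k * a + b * u"
    unfolding C_def c_def u_def k_def by (simp add: sum.distrib sum_distrib_left)
  have RC_eq: "RC = k * a * a + a * b * p + a * b * u + b * b * p"
  proof -
    have "RC = (\<Sum>i\<in>\<tau>. a * a + a * b * \<rho> i + a * b * \<gamma> i + b * b * \<rho> i)"
      unfolding RC_def r_def c_def
      by (intro sum.cong refl) (use rg in \<open>auto simp: algebra_simps\<close>)
    also have "\<dots> = k * a * a + a * b * p + a * b * u + b * b * p"
      unfolding k_def p_def u_def by (simp add: sum.distrib sum_distrib_left)
    finally show ?thesis .
  qed
  have p1: "p \<ge> 1"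
  proof -
    obtain i0 where i0: "i0 \<in> \<tau>" "\<not> G i0 v" using ex unfolding \<tau>_def by blast
    have "\<rho> i0 \<le> p" unfolding p_def using i0 fint
      by (intro member_le_sum) (auto simp: \<rho>_def)
    then show ?thesis using i0 by (simp add: \<rho>_def)
  qed
  have pu: "p \<le> u" unfolding p_def u_def
    by (rule sum_mono) (use mono in \<open>auto simp: \<rho>_def \<gamma>_def \<tau>_def\<close>)
  have uk: "u \<le> k" unfolding u_def k_def
  proof -
    have "(\<Sum>i\<in>\<tau>. \<gamma> i) \<le> (\<Sum>i\<in>\<tau>. 1)" by (rule sum_mono) (auto simp: \<gamma>_def)
    then show "(\<Sum>i\<in>\<tau>. \<gamma> i) \<le> real (card \<tau>)" by simp
  qed
  define F where "F x = 1 + x - (RC - a * R * C / (\<epsilon> + x + a * k)) / (\<epsilon> + x)" for x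
  define s where "s = \<epsilon> + a * k"
  have akpos: "a * k > 0" using apos kpos by simp
  have spos: "s > 0" unfolding s_def using lf akpos by linarith
  have E: "s * RC - a * R * C - \<epsilon> * s > 0"
    unfolding s_def R_eq C_eq RC_eq
    using key_ineq[OF lf(1,2,3,4) a_def b_def p1 pu uk] .
  have F0: "F 0 < 0"
  proof -
    have "RC - a * R * C / s = (s * RC - a * R * C) / s" using spos by (simp add: field_simps)
    also have "\<dots> > (\<epsilon> * s) / s" using E spos by (intro divide_strict_right_mono) auto
    finally have X: "RC - a * R * C / s > \<epsilon>" using spos by simp
    then have "(RC - a * R * C / s) / \<epsilon> > 1" using lf by (simp add: less_divide_eq_1_pos)
    then show ?thesis unfolding F_def s_def by simp
  qed
  have Rnn: "R \<ge> 0" unfolding R_def r_def using apos bpos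
    by (intro sum_nonneg) (auto simp: \<rho>_def)
  have Cnn: "C \<ge> 0" unfolding C_def c_def using apos bpos
    by (intro sum_nonneg) (auto simp: \<gamma>_def)
  have RCpos: "RC > 0" using RC_eq apos bpos kpos p1 pu
    by (smt (verit) mult_nonneg_nonneg mult_pos_pos)
  have FRC: "F RC > 0"
  proof -
    have "a * R * C / (\<epsilon> + RC + a * k) \<ge> 0" using apos Rnn Cnn lf RCpos kpos by simp
    then have "RC - a * R * C / (\<epsilon> + RC + a * k) \<le> RC" by simp
    then have "(RC - a * R * C / (\<epsilon> + RC + a * k)) / (\<epsilon> + RC) \<le> RC / (\<epsilon> + RC)"
      using lf RCpos by (intro divide_right_mono) auto
    moreover have "RC / (\<epsilon> + RC) < 1" using lf RCpos by simp
    ultimately show ?thesis unfolding F_def using RCpos by linarith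
  qed
  have cont: "continuous_on {0..RC} F"
    unfolding F_def using lf akpos
    by (intro continuous_intros) auto
  obtain \<mu> where mu: "0 \<le> \<mu>" "\<mu> \<le> RC" "F \<mu> = 0"
    using IVT'[of F 0 0 RC, OF less_imp_le[OF F0] less_imp_le[OF FRC] less_imp_le[OF RCpos] cont]
    by blast
  have mupos: "\<mu> > 0" using mu F0 by (cases "\<mu> = 0") auto
  define d1 where "d1 = \<epsilon> + \<mu>"
  define d2 where "d2 = \<epsilon> + \<mu> + a * k"
  have d1pos: "d1 > 0" unfolding d1_def using lf mupos by linarith
  have d2pos: "d2 > 0" unfolding d2_def using lf mupos akpos by linarith
  have d21: "d2 - a * k = d1" unfolding d1_def d2_def by simp
  define w where "w l = (if l = v then 1 else - (c l - a * C / d2) / d1)" for l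
  have wv: "w v = 1" unfolding w_def by simp
  have wt: "w i = - (c i - a * C / d2) / d1" if "i \<in> \<tau>" for i
    using that vt unfolding w_def by auto
  have S: "(\<Sum>l\<in>\<tau>. w l) = - C / d2"
  proof -
    have "(\<Sum>l\<in>\<tau>. w l) = (\<Sum>l\<in>\<tau>. - (c l - a * C / d2) / d1)" using wt by (intro sum.cong) auto
    also have "\<dots> = - (C - k * (a * C / d2)) / d1"
      unfolding C_def k_def by (simp add: sum_divide_distrib[symmetric] sum_subtractf)
    also have "C - k * (a * C / d2) = C * (d2 - a * k) / d2" using d2pos by (simp add: field_simps)
    also have "\<dots> = C * d1 / d2" using d21 by simp
    finally show ?thesis using d1pos by simp
  qed
  have Fmu: "(RC - a * R * C / d2) / d1 = 1 + \<mu>"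
    using mu(3) unfolding F_def d1_def d2_def by simp
  have eqv: "w v - (\<Sum>l\<in>\<sigma>. ?W v l * w l) = - \<mu> * w v"
  proof -
    have "(\<Sum>l\<in>\<sigma>. ?W v l * w l) = ?W v v * w v + (\<Sum>l\<in>\<tau>. ?W v l * w l)"
      unfolding sig using fint vt by simp
    also have "(\<Sum>l\<in>\<tau>. ?W v l * w l) = (\<Sum>l\<in>\<tau>. (r l * c l) / d1 - ((a * C / d2) / d1) * r l)"
    proof (intro sum.cong refl)
      fix l assume l: "l \<in> \<tau>"
      show "?W v l * w l = (r l * c l) / d1 - ((a * C / d2) / d1) * r l"
        unfolding Wvi[OF l] wt[OF l] using d1pos by (simp add: field_simps)
    qed
    also have "\<dots> = RC / d1 - ((a * C / d2) / d1) * R"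
      unfolding RC_def R_def by (simp add: sum_subtractf sum_divide_distrib sum_distrib_left)
    also have "\<dots> = (RC - a * R * C / d2) / d1"
      using d1pos d2pos by (simp add: field_simps)
    also have "\<dots> = 1 + \<mu>" using Fmu .
    finally show ?thesis using wv by (simp add: W_simps)
  qed
  have eqi: "w i - (\<Sum>l\<in>\<sigma>. ?W i l * w l) = - \<mu> * w i" if i: "i \<in> \<tau>" for i
  proof -
    have iv: "i \<noteq> v" using i vt by auto
    have "(\<Sum>l\<in>\<sigma>. ?W i l * w l) = ?W i v * w v + (\<Sum>l\<in>\<tau>. ?W i l * w l)"
      unfolding sig using fint vt by simp
    also have "(\<Sum>l\<in>\<tau>. ?W i l * w l) = (\<Sum>l\<in>\<tau>. (if i = l then a * w l else 0) - a * w l)"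
      using Wil i by (intro sum.cong) auto
    also have "\<dots> = a * w i - a * (\<Sum>l\<in>\<tau>. w l)"
      using i fint by (simp add: sum_subtractf sum_distrib_left sum.delta)
    finally have "(\<Sum>l\<in>\<sigma>. ?W i l * w l) = - c i + a * w i + a * C / d2"
      using Wiv[OF i] S wv by simp
    then have "w i - (\<Sum>l\<in>\<sigma>. ?W i l * w l) = \<epsilon> * w i + (c i - a * C / d2)"
      unfolding a_def by (simp add: algebra_simps)
    also have "c i - a * C / d2 = - d1 * w i" using wt[OF i] d1pos by (simp add: field_simps)
    finally show ?thesis unfolding d1_def by (simp add: algebra_simps)
  qed
  have "\<forall>p\<in>\<sigma>. w p - (\<Sum>l\<in>\<sigma>. ?W p l * w l) = - \<mu> * w p"
    using eqv eqi sig by auto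
  then show ?thesis using mupos wv by blast
qed


lemma not_stable_of_eig:
  assumes fin: "finite \<sigma>" and v: "v \<in> \<sigma>" and mu: "\<mu> > 0" and wv: "w v = 1"
    and eq: "\<forall>p\<in>\<sigma>. w p - (\<Sum>l\<in>\<sigma>. ctln_W G \<epsilon> \<delta> p l * w l) = - \<mu> * w p"
  shows "\<not> stable_motif G \<epsilon> \<delta> \<theta> \<sigma>"
proof
  assume st: "stable_motif G \<epsilon> \<delta> \<theta> \<sigma>"
  let ?xs = "sorted_list_of_set \<sigma>"
  let ?m = "card \<sigma>"
  let ?M = "IminusW G \<epsilon> \<delta> \<sigma>"
  let ?Mc = "map_mat complex_of_real ?M"
  have len: "length ?xs = ?m" using fin by simp
  have setxs: "set ?xs = \<sigma>" using fin by simp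
  have Mc: "?M \<in> carrier_mat ?m ?m" by (rule IminusW_carrier)
  define cv where "cv = vec ?m (\<lambda>j. complex_of_real (w (?xs ! j)))"
  obtain i0 where i0: "i0 < ?m" "?xs ! i0 = v" using v setxs len by (metis in_set_conv_nth)
  have cvne: "cv \<noteq> 0\<^sub>v ?m"
  proof
    assume "cv = 0\<^sub>v ?m"
    then have "cv $ i0 = 0" using i0 by simp
    then show False using i0 wv unfolding cv_def by simp
  qed
  have mult: "?Mc *\<^sub>v cv = complex_of_real (- \<mu>) \<cdot>\<^sub>v cv"
  proof (rule eq_vecI)
    fix i assume "i < dim_vec (complex_of_real (- \<mu>) \<cdot>\<^sub>v cv)"
    then have i: "i < ?m" unfolding cv_def by simp
    have mem: "?xs ! i \<in> \<sigma>" using i len setxs nth_mem by metis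
    have "(?Mc *\<^sub>v cv) $ i = complex_of_real (w (?xs ! i))
        - (\<Sum>l\<in>\<sigma>. complex_of_real (ctln_W G \<epsilon> \<delta> (?xs ! i) l) * complex_of_real (w l))"
      unfolding cv_def by (rule Mvec_c[OF fin i])
    also have "\<dots> = complex_of_real (w (?xs ! i) - (\<Sum>l\<in>\<sigma>. ctln_W G \<epsilon> \<delta> (?xs ! i) l * w l))"
      by simp
    also have "\<dots> = complex_of_real (- \<mu> * w (?xs ! i))" using eq mem by simp
    also have "\<dots> = (complex_of_real (- \<mu>) \<cdot>\<^sub>v cv) $ i" using i unfolding cv_def by simp
    finally show "(?Mc *\<^sub>v cv) $ i = (complex_of_real (- \<mu>) \<cdot>\<^sub>v cv) $ i" .
  qed (use Mc in \<open>simp add: cv_def\<close>)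
  have "eigenvalue ?Mc (complex_of_real (- \<mu>))"
    unfolding eigenvalue_def eigenvector_def using Mc cvne mult
    by (intro exI[of _ cv]) (auto simp: cv_def)
  then have "Re (complex_of_real (- \<mu>)) > 0" using st unfolding stable_motif_def by blast
  then show False using mu by simp
qed

theorem theorem4:
  fixes n :: nat and G :: "nat \<Rightarrow> nat \<Rightarrow> bool" and \<sigma> :: "nat set"
    and \<epsilon> \<delta> \<theta> :: real
  assumes "simple_digraph n G"
    and "\<sigma> \<subseteq> {1..n}"
    and "legal_params \<epsilon> \<delta>"
    and "\<theta> > 0"
    and "nondegenerate n G \<epsilon> \<delta> \<theta>"
    and "directed_clique G \<sigma> \<or>
         (\<exists>\<tau> \<subseteq> \<sigma>. is_clique G \<tau> \<and> card \<tau> = card \<sigma> - 1)"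
  shows "stable_motif G \<epsilon> \<delta> \<theta> \<sigma> \<longleftrightarrow> is_clique G \<sigma>"
proof
  have fin: "finite \<sigma>" using assms(2) finite_subset by blast
  note lp = assms(3)
  {
    assume "is_clique G \<sigma>"
    then show "stable_motif G \<epsilon> \<delta> \<theta> \<sigma>" using clique_stable[OF fin lp assms(4)] by blast
  }
  assume st: "stable_motif G \<epsilon> \<delta> \<theta> \<sigma>"
  then have perm: "permitted_motif G \<epsilon> \<delta> \<theta> \<sigma>" unfolding stable_motif_def by blast
  show "is_clique G \<sigma>"
  proof (rule ccontr)
    assume ncl: "\<not> is_clique G \<sigma>"
    from assms(6) show False
    proof
      assume "directed_clique G \<sigma>"
      then obtain xs where xs: "distinct xs" "set xs = \<sigma>"
        and ord: "\<forall>a b. a < b \<and> b < length xs \<longrightarrow> G (xs ! a) (xs ! b)"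
        unfolding directed_clique_def by blast
      from ncl obtain i j where ij: "i \<in> \<sigma>" "j \<in> \<sigma>" "i \<noteq> j" "\<not> (G i j \<and> G j i)"
        unfolding is_clique_def by blast
      define bad where "bad = {b. b < length xs \<and> (\<exists>a<b. \<not> G (xs ! b) (xs ! a))}"
      obtain a0 where a0: "a0 < length xs" "xs ! a0 = i" using ij(1) xs(2) by (metis in_set_conv_nth)
      obtain b0 where b0: "b0 < length xs" "xs ! b0 = j" using ij(2) xs(2) by (metis in_set_conv_nth)
      have "a0 \<noteq> b0" using a0 b0 ij(3) by auto
      have badne: "bad \<noteq> {}"
      proof (cases "a0 < b0")
        case True
        then have "G i j" using ord a0 b0 by blast
        then have "\<not> G j i" using ij(4) by blast
        then have "b0 \<in> bad" unfolding bad_def using True a0 b0 by blast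
        then show ?thesis by blast
      next
        case False
        then have lt: "b0 < a0" using \<open>a0 \<noteq> b0\<close> by simp
        then have "G j i" using ord a0 b0 by blast
        then have "\<not> G i j" using ij(4) by blast
        then have "a0 \<in> bad" unfolding bad_def using lt a0 b0 by blast
        then show ?thesis by blast
      qed
      have finbad: "finite bad" unfolding bad_def by simp
      define bm where "bm = Max bad"
      have bm: "bm \<in> bad" unfolding bm_def using finbad badne by simp
      have bmax: "c \<le> bm" if "c \<in> bad" for c unfolding bm_def using finbad that by simp
      obtain a where a: "a < bm" "\<not> G (xs ! bm) (xs ! a)" and bml: "bm < length xs"
        using bm unfolding bad_def by blast
      have al: "a < length xs" using a bml by simp
      have "\<not> permitted_motif G \<epsilon> \<delta> \<theta> \<sigma>"
      proof (rule domination[OF fin lp])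
        show "xs ! a \<in> \<sigma>" using al xs(2) by auto
        show "xs ! bm \<in> \<sigma>" using bml xs(2) by auto
        show "xs ! a \<noteq> xs ! bm" using a al bml xs(1) by (simp add: nth_eq_iff_index_eq)
        show "G (xs ! a) (xs ! bm)" using ord a bml by blast
        show "\<not> G (xs ! bm) (xs ! a)" using a by blast
        show "\<forall>l\<in>\<sigma>. l \<noteq> xs ! a \<longrightarrow> l \<noteq> xs ! bm \<longrightarrow> G l (xs ! a) \<longrightarrow> G l (xs ! bm)"
        proof (intro ballI impI)
          fix l assume l: "l \<in> \<sigma>" "l \<noteq> xs ! a" "l \<noteq> xs ! bm"
          obtain c where c: "c < length xs" "xs ! c = l" using l(1) xs(2) by (metis in_set_conv_nth)
          have "c \<noteq> bm" using c l(3) by auto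
          show "G l (xs ! bm)"
          proof (cases "c < bm")
            case True
            then show ?thesis using ord c bml by blast
          next
            case False
            then have cb: "bm < c" using \<open>c \<noteq> bm\<close> by simp
            then have "c \<notin> bad" using bmax by force
            then have "\<forall>a'<c. G (xs ! c) (xs ! a')" unfolding bad_def using c by blast
            then show ?thesis using cb c by blast
          qed
        qed
      qed
      then show False using perm by blast
    next
      assume "\<exists>\<tau> \<subseteq> \<sigma>. is_clique G \<tau> \<and> card \<tau> = card \<sigma> - 1"
      then obtain \<tau> where tsub: "\<tau> \<subseteq> \<sigma>" and tcl: "is_clique G \<tau>" and tcard: "card \<tau> = card \<sigma> - 1"
        by blast
      have sne: "\<sigma> \<noteq> {}" using ncl unfolding is_clique_def by blast
      then have cpos: "card \<sigma> > 0" using fin by (simp add: card_gt_0_iff)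
      have "\<tau> \<noteq> \<sigma>" using tcard cpos by auto
      then obtain v where v: "v \<in> \<sigma>" "v \<notin> \<tau>" using tsub by blast
      have tsub2: "\<tau> \<subseteq> \<sigma> - {v}" using tsub v by blast
      have "card (\<sigma> - {v}) = card \<tau>" using tcard v fin by simp
      then have teq: "\<tau> = \<sigma> - {v}" using tsub2 fin by (intro card_subset_eq) auto
      have tne: "\<sigma> - {v} \<noteq> {}"
      proof
        assume "\<sigma> - {v} = {}"
        then have "\<sigma> = {v}" using v by blast
        then show False using ncl unfolding is_clique_def by blast
      qed
      have cl': "is_clique G (\<sigma> - {v})" using tcl teq by simp
      have exbad: "\<exists>i\<in>\<sigma> - {v}. \<not> (G i v \<and> G v i)"
      proof (rule ccontr)
        assume "\<not> (\<exists>i\<in>\<sigma> - {v}. \<not> (G i v \<and> G v i))"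
        then have h: "\<forall>i\<in>\<sigma> - {v}. G i v \<and> G v i" by blast
        have "is_clique G \<sigma>" unfolding is_clique_def
        proof (intro ballI impI)
          fix i j assume "i \<in> \<sigma>" "j \<in> \<sigma>" "i \<noteq> j"
          then show "G i j \<and> G j i" using h cl' unfolding is_clique_def by (cases "i = v"; cases "j = v") auto
        qed
        then show False using ncl by blast
      qed
      show False
      proof (cases "\<exists>i\<in>\<sigma> - {v}. G v i \<and> \<not> G i v")
        case True
        then obtain i where i: "i \<in> \<sigma> - {v}" "G v i" "\<not> G i v" by blast
        have "\<not> permitted_motif G \<epsilon> \<delta> \<theta> \<sigma>"
        proof (rule domination[OF fin lp v(1)])
          show "i \<in> \<sigma>" "v \<noteq> i" "G v i" "\<not> G i v" using i by auto
          show "\<forall>l\<in>\<sigma>. l \<noteq> v \<longrightarrow> l \<noteq> i \<longrightarrow> G l v \<longrightarrow> G l i"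
            using cl' i unfolding is_clique_def by blast
        qed
        then show False using perm by blast
      next
        case nA: False
        show False
        proof (cases "\<forall>i\<in>\<sigma> - {v}. G i v")
          case True
          then obtain i where i: "i \<in> \<sigma> - {v}" "\<not> G v i" using exbad by blast
          have "\<not> permitted_motif G \<epsilon> \<delta> \<theta> \<sigma>"
          proof (rule domination[OF fin lp _ v(1)])
            show "i \<in> \<sigma>" "i \<noteq> v" "G i v" "\<not> G v i" using i True by auto
            show "\<forall>l\<in>\<sigma>. l \<noteq> i \<longrightarrow> l \<noteq> v \<longrightarrow> G l i \<longrightarrow> G l v"
              using True by blast
          qed
          then show False using perm by blast
        next
          case False
          then have ex: "\<exists>i\<in>\<sigma> - {v}. \<not> G i v" by blast
          have mono: "\<forall>i\<in>\<sigma> - {v}. G v i \<longrightarrow> G i v" using nA by blast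
          obtain \<mu> w where mw: "\<mu> > 0" "w v = 1"
            "\<forall>p\<in>\<sigma>. w p - (\<Sum>l\<in>\<sigma>. ctln_W G \<epsilon> \<delta> p l * w l) = - \<mu> * w p"
            using neg_eig[OF fin lp v(1) tne cl' ex mono] by blast
          have "\<not> stable_motif G \<epsilon> \<delta> \<theta> \<sigma>" using not_stable_of_eig[OF fin v(1) mw] .
          then show False using st by blast
        qed
      qed
    qed
  qed
qed

end
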